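(* Let $E$ be a Fréchet space, let $E^*$ be its topological dual (the space of continuous linear functionals $E\to\mathbb{R}$) endowed with the weak$^*$ topology, let $[a,b]\subset\mathbb{R}$ be a compact interval and let $f:[a,b]\to E^*$ be continuous. Then the closed convex hull $\overline{\mathrm{co}}(f([a,b]))$ is compact in $E^*$.
   Context: The closed convex hull $\overline{\mathrm{co}}(K)$ of a subset $K$ of a topological vector space is the closure of the set of all finite convex combinations of elements of $K$. *)

theory Defs
  imports "HOL-Analysis.Analysis"
begin

definition seminorm :: "('a::real_vector \<Rightarrow> real) \<Rightarrow> bool" where
  "seminorm q \<longleftrightarrow> (\<forall>x y. q (x + y) \<le> q x + q y) \<and> (\<forall>c x. q (c *\<^sub>R x) = \<bar>c\<bar> * q x)"

definition seminorm_topology :: "(nat \<Rightarrow> 'a::real_vector \<Rightarrow> real) \<Rightarrow> 'a topology" where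
  "seminorm_topology p = topology (\<lambda>U. \<forall>x\<in>U. \<exists>F e. finite F \<and> e > 0 \<and>
      {y. \<forall>n\<in>F. p n (y - x) < e} \<subseteq> U)"

text \<open>Frechet space: Hausdorff, locally convex, metrizable (topology given by countably many
seminorms), complete.\<close>
definition frechet_seminorms :: "(nat \<Rightarrow> 'a::real_vector \<Rightarrow> real) \<Rightarrow> bool" where
  "frechet_seminorms p \<longleftrightarrow>
     (\<forall>n. seminorm (p n)) \<and>
     (\<forall>x. x \<noteq> 0 \<longrightarrow> (\<exists>n. p n x \<noteq> 0)) \<and>
     (\<forall>s::nat \<Rightarrow> 'a. (\<forall>n e. e > 0 \<longrightarrow> (\<exists>N. \<forall>i\<ge>N. \<forall>j\<ge>N. p n (s i - s j) < e)) \<longrightarrow>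
        (\<exists>l. \<forall>n e. e > 0 \<longrightarrow> (\<exists>N. \<forall>i\<ge>N. p n (s i - l) < e)))"

definition top_dual :: "(nat \<Rightarrow> 'a::real_vector \<Rightarrow> real) \<Rightarrow> ('a \<Rightarrow> real) set" where
  "top_dual p = {\<phi>. linear \<phi> \<and> continuous_map (seminorm_topology p) euclideanreal \<phi>}"

definition weak_star :: "(nat \<Rightarrow> 'a::real_vector \<Rightarrow> real) \<Rightarrow> ('a \<Rightarrow> real) topology" where
  "weak_star p = subtopology (powertop_real UNIV) (top_dual p)"

definition fun_convex_hull :: "('a \<Rightarrow> real) set \<Rightarrow> ('a \<Rightarrow> real) set" where
  "fun_convex_hull S = {\<phi>. \<exists>(n::nat) c g. (\<forall>i<n. 0 \<le> c i \<and> g i \<in> S) \<and> (\<Sum>i<n. c i) = 1 \<and>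
       \<phi> = (\<lambda>x. \<Sum>i<n. c i * g i x)}"

end

theory Submission
  imports Defs
begin

lemma sn_basic:
  assumes "seminorm q"
  shows "q 0 = 0" "q (- x) = q x" "q x \<ge> 0" "q (x - y) = q (y - x)"
    "q (c *\<^sub>R x) = \<bar>c\<bar> * q x" "q (x + y) \<le> q x + q y"
proof -
  have h: "\<And>c x. q (c *\<^sub>R x) = \<bar>c\<bar> * q x" "\<And>x y. q (x + y) \<le> q x + q y"
    using assms by (auto simp: seminorm_def)
  show "q 0 = 0" using h(1)[of 0 0] by simp
  show m: "q (- x) = q x" using h(1)[of "-1" x] by simp
  have "q 0 \<le> q x + q (- x)" using h(2)[of x "-x"] by simp
  then show "q x \<ge> 0" using m \<open>q 0 = 0\<close> by simp
  show "q (x - y) = q (y - x)" using h(1)[of "-1" "x - y"] by simp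
  show "q (c *\<^sub>R x) = \<bar>c\<bar> * q x" "q (x + y) \<le> q x + q y" using h by auto
qed

lemma istop_sn:
  fixes p :: "nat \<Rightarrow> 'a::real_vector \<Rightarrow> real"
  shows "istopology (\<lambda>U. \<forall>x\<in>U. \<exists>F e. finite F \<and> e > 0 \<and>
      {y. \<forall>n\<in>F. p n (y - x) < e} \<subseteq> U)"
  unfolding istopology_def
proof (intro conjI allI impI)
  fix S T :: "'a set"
  assume S: "\<forall>x\<in>S. \<exists>F e. finite F \<and> e > 0 \<and> {y. \<forall>n\<in>F. p n (y - x) < e} \<subseteq> S"
    and T: "\<forall>x\<in>T. \<exists>F e. finite F \<and> e > 0 \<and> {y. \<forall>n\<in>F. p n (y - x) < e} \<subseteq> T"
  show "\<forall>x\<in>S \<inter> T. \<exists>F e. finite F \<and> e > 0 \<and> {y. \<forall>n\<in>F. p n (y - x) < e} \<subseteq> S \<inter> T"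
  proof
    fix x assume x: "x \<in> S \<inter> T"
    from x S obtain F1 e1 where "finite F1" "e1 > 0" "{y. \<forall>n\<in>F1. p n (y - x) < e1} \<subseteq> S" by blast
    from x T obtain F2 e2 where "finite F2" "e2 > 0" "{y. \<forall>n\<in>F2. p n (y - x) < e2} \<subseteq> T" by blast
    then show "\<exists>F e. finite F \<and> e > 0 \<and> {y. \<forall>n\<in>F. p n (y - x) < e} \<subseteq> S \<inter> T"
    proof (intro exI[of _ "F1 \<union> F2"] exI[of _ "min e1 e2"] conjI)
      show "finite (F1 \<union> F2)" using \<open>finite F1\<close> \<open>finite F2\<close> by simp
      show "min e1 e2 > 0" using \<open>e1 > 0\<close> \<open>e2 > 0\<close> by simp
      show "{y. \<forall>n\<in>F1 \<union> F2. p n (y - x) < min e1 e2} \<subseteq> S \<inter> T"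
      proof
        fix y assume y: "y \<in> {y. \<forall>n\<in>F1 \<union> F2. p n (y - x) < min e1 e2}"
        then have "y \<in> {y. \<forall>n\<in>F1. p n (y - x) < e1}" by simp
        moreover from y have "y \<in> {y. \<forall>n\<in>F2. p n (y - x) < e2}" by simp
        ultimately show "y \<in> S \<inter> T" using \<open>{y. \<forall>n\<in>F1. p n (y - x) < e1} \<subseteq> S\<close>
          \<open>{y. \<forall>n\<in>F2. p n (y - x) < e2} \<subseteq> T\<close> by blast
      qed
    qed
  qed
next
  fix K :: "'a set set"
  assume "\<forall>K\<in>K. \<forall>x\<in>K. \<exists>F e. finite F \<and> e > 0 \<and> {y. \<forall>n\<in>F. p n (y - x) < e} \<subseteq> K"
  then show "\<forall>x\<in>\<Union>K. \<exists>F e. finite F \<and> e > 0 \<and> {y. \<forall>n\<in>F. p n (y - x) < e} \<subseteq> \<Union>K"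
  proof (intro ballI)
    fix x assume hK: "\<forall>K\<in>K. \<forall>x\<in>K. \<exists>F e. finite F \<and> e > 0 \<and> {y. \<forall>n\<in>F. p n (y - x) < e} \<subseteq> K"
      and "x \<in> \<Union>K"
    then obtain K0 where "K0 \<in> K" "x \<in> K0" by blast
    then obtain F e where "finite F" "e > 0" "{y. \<forall>n\<in>F. p n (y - x) < e} \<subseteq> K0" using hK by meson
    moreover have "K0 \<subseteq> \<Union>K" using \<open>K0 \<in> K\<close> by blast
    ultimately show "\<exists>F e. finite F \<and> e > 0 \<and> {y. \<forall>n\<in>F. p n (y - x) < e} \<subseteq> \<Union>K" by blast
  qed
qed

lemma openin_sn: "openin (seminorm_topology p) U \<longleftrightarrow> (\<forall>x\<in>U. \<exists>F e. finite F \<and> e > 0 \<and>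
      {y. \<forall>n\<in>F. p n (y - x) < e} \<subseteq> U)"
  unfolding seminorm_topology_def topology_inverse'[OF istop_sn] ..

lemma topspace_sn: "topspace (seminorm_topology p) = UNIV"
proof -
  have "openin (seminorm_topology p) UNIV" unfolding openin_sn
    by (intro ballI exI[of _ "{}"] exI[of _ 1]) auto
  then show ?thesis using openin_subset by blast
qed

definition dd :: "(nat \<Rightarrow> 'a::real_vector \<Rightarrow> real) \<Rightarrow> 'a \<Rightarrow> 'a \<Rightarrow> real" where
  "dd p x y = (SUP n. min (inverse (real n + 1)) (p n (x - y)))"

lemma dd_bdd: "bdd_above (range (\<lambda>n. min (inverse (real n + 1)) (p n (x - y))))"
proof -
  have "inverse (real n + 1) \<le> 1" for n by (simp add: inverse_le_1_iff)
  then show ?thesis by (intro bdd_aboveI[of _ 1]) (auto intro: min.coboundedI1 order_trans)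
qed

lemma dd_upper: "min (inverse (real n + 1)) (p n (x - y)) \<le> dd p x y"
  unfolding dd_def by (rule cSUP_upper[OF _ dd_bdd]) simp

lemma dd_le: "(\<And>n. min (inverse (real n + 1)) (p n (x - y)) \<le> B) \<Longrightarrow> dd p x y \<le> B"
  unfolding dd_def by (rule cSUP_least) auto

lemma min_tri: "0 < (i::real) \<Longrightarrow> 0 \<le> a \<Longrightarrow> 0 \<le> b \<Longrightarrow> c \<le> a + b \<Longrightarrow> min i c \<le> min i a + min i b"
  by (simp add: min_def)

lemma dd_metric:
  assumes "frechet_seminorms p"
  shows "Metric_space UNIV (dd p)"
proof
  have sn: "\<And>n. seminorm (p n)" using assms by (simp add: frechet_seminorms_def)
  fix x y z :: 'a
  have nn: "\<And>n v. 0 \<le> p n v" using sn_basic(3)[OF sn] by blast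
  show "0 \<le> dd p x y"
  proof -
    have "0 \<le> min (inverse (real 0 + 1)) (p 0 (x - y))" using nn[of 0 "x - y"] by simp
    then show ?thesis using dd_upper[of 0 p x y] by linarith
  qed
  show "dd p x y = dd p y x" unfolding dd_def using sn_basic(4)[OF sn] by metis
  show "dd p x y = 0 \<longleftrightarrow> x = y"
  proof
    assume "dd p x y = 0"
    then have "p n (x - y) = 0" for n
    proof -
      have "min (inverse (real n + 1)) (p n (x - y)) \<le> 0" using dd_upper[of n p x y] \<open>dd p x y = 0\<close> by simp
      moreover have "0 < inverse (real n + 1)" by simp
      ultimately show ?thesis using nn[of n "x - y"] by (auto simp: min_def split: if_splits)
    qed
    then show "x = y" using assms unfolding frechet_seminorms_def by (metis right_minus_eq)
  next
    assume "x = y"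
    have "dd p x y \<le> 0"
      by (rule dd_le) (simp add: \<open>x = y\<close> sn_basic(1)[OF sn])
    then show "dd p x y = 0" using \<open>0 \<le> dd p x y\<close> by linarith
  qed
  show "dd p x z \<le> dd p x y + dd p y z"
  proof (rule dd_le)
    fix n
    have "p n (x - z) \<le> p n (x - y) + p n (y - z)"
      using sn_basic(6)[OF sn, of n "x - y" "y - z"] by simp
    then have "min (inverse (real n + 1)) (p n (x - z)) \<le>
       min (inverse (real n + 1)) (p n (x - y)) + min (inverse (real n + 1)) (p n (y - z))"
      using min_tri[of "inverse (real n + 1)" "p n (x - y)" "p n (y - z)" "p n (x - z)"] nn[of n "x - y"] nn[of n "y - z"] by simp
    then show "min (inverse (real n + 1)) (p n (x - z)) \<le> dd p x y + dd p y z"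
      using dd_upper[of n p x y] dd_upper[of n p y z] by linarith
  qed
qed

lemma dd_small:
  assumes "dd p x y < d" "d \<le> inverse (real n + 1)"
  shows "p n (x - y) < d"
  using dd_upper[of n p x y] assms by linarith

lemma dd_less:
  assumes "\<And>n. n < N \<Longrightarrow> p n (x - y) < e" "e < r" "inverse (real N + 1) < r"
  shows "dd p x y < r"
proof -
  have "dd p x y \<le> max e (inverse (real N + 1))"
  proof (rule dd_le)
    fix n
    show "min (inverse (real n + 1)) (p n (x - y)) \<le> max e (inverse (real N + 1))"
    proof (cases "n < N")
      case True then show ?thesis using assms(1)[of n] by linarith
    next
      case False
      then have "inverse (real n + 1) \<le> inverse (real N + 1)"
        by (simp add: le_imp_inverse_le)
      then show ?thesis by linarith
    qed
  qed
  then show ?thesis using assms by linarith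
qed


lemma fin_unif:
  fixes P :: "nat \<Rightarrow> nat \<Rightarrow> bool" and K :: nat
  assumes "\<And>n. \<exists>N. \<forall>i\<ge>N. P n i"
  shows "\<exists>N. \<forall>i\<ge>N. \<forall>n<K. P n i"
proof (induction K)
  case 0 then show ?case by simp
next
  case (Suc K)
  then obtain N1 where N1: "\<forall>i\<ge>N1. \<forall>n<K. P n i" by blast
  obtain N2 where N2: "\<forall>i\<ge>N2. P K i" using assms by blast
  show ?case
    by (rule exI[of _ "max N1 N2"]) (metis N1 N2 less_Suc_eq max.bounded_iff)
qed

lemma dd_complete:
  assumes "frechet_seminorms p"
  shows "Metric_space.mcomplete UNIV (dd p)"
proof -
  interpret M: Metric_space UNIV "dd p" by (rule dd_metric[OF assms])
  show ?thesis unfolding M.mcomplete_def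
  proof (intro allI impI)
    fix \<sigma> :: "nat \<Rightarrow> 'a"
    assume "M.MCauchy \<sigma>"
    then have C: "\<forall>\<epsilon>>0. \<exists>N. \<forall>n n'. N \<le> n \<longrightarrow> N \<le> n' \<longrightarrow> dd p (\<sigma> n) (\<sigma> n') < \<epsilon>"
      unfolding M.MCauchy_def by blast
    have "\<exists>N. \<forall>i\<ge>N. \<forall>j\<ge>N. p n (\<sigma> i - \<sigma> j) < e" if "e > 0" for n e
    proof -
      have "min e (inverse (real n + 1)) > 0" using that by simp
      then obtain N where N: "\<forall>i j. N \<le> i \<longrightarrow> N \<le> j \<longrightarrow> dd p (\<sigma> i) (\<sigma> j) < min e (inverse (real n + 1))"
        using C by blast
      show ?thesis
      proof (intro exI[of _ N] allI impI)
        fix i j assume "N \<le> i" "N \<le> j"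
        then have "p n (\<sigma> i - \<sigma> j) < min e (inverse (real n + 1))"
          using N by (intro dd_small[of p "\<sigma> i" "\<sigma> j" _ n]) auto
        then show "p n (\<sigma> i - \<sigma> j) < e" by linarith
      qed
    qed
    then obtain l where l: "\<forall>n e. e > 0 \<longrightarrow> (\<exists>N. \<forall>i\<ge>N. p n (\<sigma> i - l) < e)"
      using assms unfolding frechet_seminorms_def by blast
    have "limitin M.mtopology \<sigma> l sequentially"
      unfolding M.limitin_metric eventually_sequentially
    proof (intro conjI allI impI)
      fix \<epsilon> :: real assume "\<epsilon> > 0"
      obtain K where K: "inverse (real (Suc K)) < \<epsilon>" using reals_Archimedean[OF \<open>\<epsilon> > 0\<close>] by blast
      have "\<exists>N. \<forall>i\<ge>N. p n (\<sigma> i - l) < \<epsilon>/2" for n using l \<open>\<epsilon> > 0\<close> half_gt_zero by blast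
      then obtain N where N: "\<forall>i\<ge>N. \<forall>n<K. p n (\<sigma> i - l) < \<epsilon>/2"
        using fin_unif[of "\<lambda>n i. p n (\<sigma> i - l) < \<epsilon>/2" K] by blast
      show "\<exists>N. \<forall>n\<ge>N. \<sigma> n \<in> UNIV \<and> dd p (\<sigma> n) l < \<epsilon>"
      proof (intro exI[of _ N] allI impI conjI)
        fix i assume "N \<le> i"
        show "dd p (\<sigma> i) l < \<epsilon>"
          by (rule dd_less[of K p _ _ "\<epsilon>/2"]) (use N \<open>N \<le> i\<close> \<open>\<epsilon> > 0\<close> K in \<open>auto simp: add.commute\<close>)
      qed simp
    qed simp
    then show "\<exists>x. limitin M.mtopology \<sigma> x sequentially" by blast
  qed
qed

lemma dual_metric_cont:
  assumes "\<phi> \<in> top_dual p" "e > 0" "\<And>n. seminorm (p n)"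
  shows "\<exists>\<delta>>0. \<forall>y. dd p x y < \<delta> \<longrightarrow> \<bar>\<phi> y - \<phi> x\<bar> < e"
proof -
  have cm: "continuous_map (seminorm_topology p) euclideanreal \<phi>"
    using assms(1) by (simp add: top_dual_def)
  have "openin (seminorm_topology p) {z \<in> topspace (seminorm_topology p). \<phi> z \<in> ball (\<phi> x) e}"
    by (rule openin_continuous_map_preimage[OF cm]) simp
  then have "openin (seminorm_topology p) {z. \<phi> z \<in> ball (\<phi> x) e}" by (simp add: topspace_sn)
  moreover have "x \<in> {z. \<phi> z \<in> ball (\<phi> x) e}" using assms(2) by simp
  ultimately obtain F e' where F: "finite F" "e' > 0" "{y. \<forall>n\<in>F. p n (y - x) < e'} \<subseteq> {z. \<phi> z \<in> ball (\<phi> x) e}"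
    unfolding openin_sn by blast
  obtain k where k: "F \<subseteq> {..<k}" using finite_nat_bounded[OF F(1)] by blast
  show ?thesis
  proof (intro exI[of _ "min e' (inverse (real k + 1))"] conjI allI impI)
    show "min e' (inverse (real k + 1)) > 0" using F(2) by simp
    fix y assume y: "dd p x y < min e' (inverse (real k + 1))"
    have "p n (y - x) < e'" if "n \<in> F" for n
    proof -
      have "n < k" using k that by auto
      then have "inverse (real k + 1) \<le> inverse (real n + 1)" by (simp add: le_imp_inverse_le)
      then have "min e' (inverse (real k + 1)) \<le> inverse (real n + 1)" by (rule min.coboundedI2)
      then have "p n (x - y) < min e' (inverse (real k + 1))"
        using y by (rule dd_small[rotated])
      moreover have "p n (x - y) = p n (y - x)"
        using sn_basic(4)[OF assms(3)] by blast
      ultimately show ?thesis by linarith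
    qed
    then have "\<phi> y \<in> ball (\<phi> x) e" using F(3) by blast
    then show "\<bar>\<phi> y - \<phi> x\<bar> < e" by (simp add: dist_real_def abs_minus_commute)
  qed
qed


lemma closed_pre:
  assumes "continuous_map (powertop_real UNIV) euclideanreal h" "closed C"
  shows "closedin (powertop_real UNIV) {\<phi>. h \<phi> \<in> C}"
proof -
  have "closedin (powertop_real UNIV) {\<phi> \<in> topspace (powertop_real UNIV). h \<phi> \<in> C}"
    by (rule closedin_continuous_map_preimage[OF assms(1)]) (use assms(2) closed_closedin in blast)
  then show ?thesis by simp
qed

lemma proj_cont: "continuous_map (powertop_real UNIV) euclideanreal (\<lambda>\<phi>. \<phi> x)"
  using continuous_map_product_projection[of x UNIV "\<lambda>_. euclideanreal"] by simp

theorem proposition4: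
  fixes p :: "nat \<Rightarrow> 'a::real_vector \<Rightarrow> real"
    and f :: "real \<Rightarrow> ('a \<Rightarrow> real)"
    and a b :: real
  assumes "frechet_seminorms p"
    and "continuous_map (top_of_set {a..b}) (weak_star p) f"
  shows "compactin (weak_star p) ((weak_star p) closure_of (fun_convex_hull (f ` {a..b})))"
proof -
  have sn: "\<And>n. seminorm (p n)" using assms(1) by (simp add: frechet_seminorms_def)
  have nn: "\<And>n v. 0 \<le> p n v" using sn_basic(3)[OF sn] by blast
  interpret M: Metric_space UNIV "dd p" by (rule dd_metric[OF assms(1)])
  define S where "S = f ` {a..b}"
  have top_ws: "topspace (weak_star p) = top_dual p" unfolding weak_star_def by simp
  have Sd: "S \<subseteq> top_dual p"
    using continuous_map_image_subset_topspace[OF assms(2)] top_ws unfolding S_def by simp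
  have lin: "\<And>\<phi>. \<phi> \<in> S \<Longrightarrow> linear \<phi>" using Sd by (auto simp: top_dual_def)
  have ptb: "\<exists>B. \<forall>\<phi>\<in>S. \<bar>\<phi> x\<bar> \<le> B" for x
  proof -
    have "continuous_map (weak_star p) euclideanreal (\<lambda>\<phi>. \<phi> x)"
      unfolding weak_star_def by (rule continuous_map_from_subtopology[OF proj_cont])
    then have "continuous_map (top_of_set {a..b}) euclideanreal ((\<lambda>\<phi>. \<phi> x) \<circ> f)"
      by (rule continuous_map_compose[OF assms(2)])
    then have "continuous_on {a..b} ((\<lambda>\<phi>. \<phi> x) \<circ> f)"
      by (simp add: continuous_map_iff_continuous)
    then have "compact (((\<lambda>\<phi>. \<phi> x) \<circ> f) ` {a..b})" by (rule compact_continuous_image) simp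
    then have "bounded (((\<lambda>\<phi>. \<phi> x) \<circ> f) ` {a..b})" by (rule compact_imp_bounded)
    then obtain B where "\<forall>z\<in>((\<lambda>\<phi>. \<phi> x) \<circ> f) ` {a..b}. \<bar>z\<bar> \<le> B" by (auto simp: bounded_real)
    then show ?thesis unfolding S_def by auto
  qed
  define A where "A k = {x. \<forall>\<phi>\<in>S. \<bar>\<phi> x\<bar> \<le> real k}" for k :: nat
  have cover: "\<Union>(range A) = UNIV"
  proof (intro set_eqI iffI)
    fix x :: 'a
    obtain B where B: "\<forall>\<phi>\<in>S. \<bar>\<phi> x\<bar> \<le> B" using ptb by blast
    obtain k :: nat where "B \<le> real k" using real_arch_simple by blast
    then have "x \<in> A k" using B unfolding A_def by force
    then show "x \<in> \<Union>(range A)" by blast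
  qed simp
  have closedA: "closedin M.mtopology (A k)" for k
    unfolding closedin_def M.topspace_mtopology
  proof (intro conjI)
    show "openin M.mtopology (UNIV - A k)" unfolding M.openin_mtopology
    proof (intro conjI allI impI)
      fix x assume "x \<in> UNIV - A k"
      then obtain \<phi> where \<phi>: "\<phi> \<in> S" "\<bar>\<phi> x\<bar> > real k" unfolding A_def by force
      then obtain \<delta> where \<delta>: "\<delta> > 0" "\<forall>y. dd p x y < \<delta> \<longrightarrow> \<bar>\<phi> y - \<phi> x\<bar> < \<bar>\<phi> x\<bar> - real k"
        using dual_metric_cont[of \<phi> p "\<bar>\<phi> x\<bar> - real k" x] Sd sn by auto
      have "M.mball x \<delta> \<subseteq> UNIV - A k"
      proof
        fix y assume "y \<in> M.mball x \<delta>"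
        then have "\<bar>\<phi> y - \<phi> x\<bar> < \<bar>\<phi> x\<bar> - real k" using \<delta> by simp
        then have "\<bar>\<phi> y\<bar> > real k" by linarith
        then show "y \<in> UNIV - A k" using \<phi>(1) unfolding A_def by force
      qed
      then show "\<exists>r>0. M.mball x r \<subseteq> UNIV - A k" using \<delta>(1) by blast
    qed simp
  qed simp
  have "\<exists>k. M.mtopology interior_of A k \<noteq> {}"
  proof (rule ccontr)
    assume "\<nexists>k. M.mtopology interior_of A k \<noteq> {}"
    then have "M.mtopology interior_of \<Union>(range A) = {}"
      using M.metric_Baire_category_alt[OF dd_complete[OF assms(1)], of "range A"] closedA by auto
    moreover have "M.mtopology interior_of UNIV = UNIV"
      by (metis M.topspace_mtopology interior_of_topspace)
    ultimately show False using cover by simp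
  qed
  then obtain k x0 where x0: "x0 \<in> M.mtopology interior_of A k" by blast
  have "openin M.mtopology (M.mtopology interior_of A k)" by (rule openin_interior_of)
  then have "\<exists>r>0. M.mball x0 r \<subseteq> M.mtopology interior_of A k"
    using x0 unfolding M.openin_mtopology by (elim conjE allE impE) auto
  then obtain r where r: "r > 0" "M.mball x0 r \<subseteq> M.mtopology interior_of A k" by blast
  have rA: "M.mball x0 r \<subseteq> A k" by (rule subset_trans[OF r(2) interior_of_subset])
  from reals_Archimedean[OF r(1)] obtain N where N: "inverse (real (Suc N)) < r" ..
  define \<eta> where "\<eta> = r / 2"
  define M' where "M' = 2 * real k"
  have \<eta>: "\<eta> > 0" "\<eta> < r" using r(1) unfolding \<eta>_def by auto
  have M': "M' \<ge> 0" unfolding M'_def by simp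
  have bnd: "\<bar>\<phi> y\<bar> \<le> M'" if "\<forall>n<N. p n y < \<eta>" "\<phi> \<in> S" for y \<phi>
  proof -
    have "dd p x0 (x0 + y) < r"
    proof (rule dd_less[of N p _ _ \<eta>])
      fix n assume "n < N"
      then show "p n (x0 - (x0 + y)) < \<eta>" using that(1) sn_basic(2)[OF sn, of n y] by simp
    qed (use \<eta> N in \<open>auto simp: add.commute\<close>)
    then have "x0 + y \<in> A k" using rA by auto
    moreover have "x0 \<in> A k" using r rA by auto
    ultimately have "\<bar>\<phi> (x0 + y)\<bar> \<le> real k" "\<bar>\<phi> x0\<bar> \<le> real k" using that(2) unfolding A_def by auto
    moreover have "\<phi> (x0 + y) = \<phi> x0 + \<phi> y" using lin[OF that(2)] by (simp add: linear_add)
    ultimately show ?thesis unfolding M'_def by linarith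
  qed
  define K where "K = {\<phi>. linear \<phi> \<and> (\<forall>y. (\<forall>n<N. p n y < \<eta>) \<longrightarrow> \<bar>\<phi> y\<bar> \<le> M')}"
  define H where "H = fun_convex_hull S"
  have HK: "H \<subseteq> K"
  proof
    fix \<phi> assume "\<phi> \<in> H"
    then have "\<exists>(n::nat) c g. (\<forall>i<n. 0 \<le> c i \<and> g i \<in> S) \<and> (\<Sum>i<n. c i) = 1 \<and>
       \<phi> = (\<lambda>x. \<Sum>i<n. c i * g i x)" unfolding H_def fun_convex_hull_def by (rule CollectD)
    then obtain n :: nat and c g where cg: "\<forall>i<n. 0 \<le> c i \<and> g i \<in> S" "(\<Sum>i<n. c i) = 1"
      "\<phi> = (\<lambda>x. \<Sum>i<n. c i * g i x)" by iprover
    have lg: "linear (g i)" if "i \<in> {..<n}" for i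
    proof (rule lin)
      show "g i \<in> S" using cg(1) that by simp
    qed
    have "linear \<phi>" unfolding linear_iff
    proof (intro conjI allI)
      fix x y
      have "\<phi> (x + y) = (\<Sum>i<n. c i * g i x + c i * g i y)"
        unfolding cg(3) by (rule sum.cong) (simp_all add: linear_add[OF lg] distrib_left)
      then show "\<phi> (x + y) = \<phi> x + \<phi> y" unfolding cg(3) by (simp add: sum.distrib)
    next
      fix t x
      have "\<phi> (t *\<^sub>R x) = (\<Sum>i<n. t * (c i * g i x))"
        unfolding cg(3) by (rule sum.cong) (simp_all add: linear_scale[OF lg])
      then show "\<phi> (t *\<^sub>R x) = t *\<^sub>R \<phi> x" unfolding cg(3) by (simp add: sum_distrib_left)
    qed
    moreover have "\<bar>\<phi> y\<bar> \<le> M'" if "\<forall>n<N. p n y < \<eta>" for y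
    proof -
      have "\<bar>\<phi> y\<bar> \<le> (\<Sum>i<n. \<bar>c i * g i y\<bar>)" unfolding cg(3) by (rule sum_abs)
      also have "\<dots> \<le> (\<Sum>i<n. c i * M')"
      proof (rule sum_mono)
        fix i assume "i \<in> {..<n}"
        then have "0 \<le> c i" "\<bar>g i y\<bar> \<le> M'" using cg(1) bnd[OF that] by auto
        then show "\<bar>c i * g i y\<bar> \<le> c i * M'" by (simp add: abs_mult mult_left_mono)
      qed
      also have "\<dots> = M'" using cg(2) by (simp add: sum_distrib_right[symmetric])
      finally show ?thesis .
    qed
    ultimately show "\<phi> \<in> K" unfolding K_def by blast
  qed
  have Kd: "K \<subseteq> top_dual p"
  proof
    fix \<phi> assume "\<phi> \<in> K"
    then have l: "linear \<phi>" and b: "\<And>y. (\<forall>n<N. p n y < \<eta>) \<Longrightarrow> \<bar>\<phi> y\<bar> \<le> M'"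
      unfolding K_def by auto
    have "continuous_map (seminorm_topology p) euclideanreal \<phi>"
      unfolding continuous_map_def topspace_sn
    proof (intro conjI allI impI)
      fix U :: "real set" assume "openin euclideanreal U"
      then have oU: "open U" by simp
      show "openin (seminorm_topology p) {x \<in> UNIV. \<phi> x \<in> U}" unfolding openin_sn
      proof
        fix x assume "x \<in> {x \<in> UNIV. \<phi> x \<in> U}"
        then obtain \<epsilon> where \<epsilon>: "\<epsilon> > 0" "ball (\<phi> x) \<epsilon> \<subseteq> U" using oU openE by force
        define e where "e = \<eta> * \<epsilon> / (M' + 1)"
        define s where "s = (M' + 1) / \<epsilon>"
        have e: "e > 0" unfolding e_def using \<epsilon> \<eta> M' by simp
        have s: "s > 0" unfolding s_def using \<epsilon> M' by simp
        have nz: "\<epsilon> + M' * \<epsilon> \<noteq> 0" "M' + 1 \<noteq> 0" "\<epsilon> \<noteq> 0" using \<epsilon> M'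
          by (smt (verit) mult_nonneg_nonneg)+
        have se: "s * e = \<eta>" unfolding s_def e_def using nz by (simp add: field_simps)
        have "{y. \<forall>n\<in>{..<N}. p n (y - x) < e} \<subseteq> {x \<in> UNIV. \<phi> x \<in> U}"
        proof
          fix y assume y: "y \<in> {y. \<forall>n\<in>{..<N}. p n (y - x) < e}"
          have "p n (s *\<^sub>R (y - x)) < \<eta>" if "n < N" for n
          proof -
            have "p n (s *\<^sub>R (y - x)) = s * p n (y - x)" using sn_basic(5)[OF sn] s by simp
            also have "\<dots> < s * e" using y that s by simp
            finally show ?thesis using se by simp
          qed
          then have "\<bar>\<phi> (s *\<^sub>R (y - x))\<bar> \<le> M'" using b by blast
          moreover have "\<phi> (s *\<^sub>R (y - x)) = s * (\<phi> y - \<phi> x)"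
            using l by (simp add: linear_scale linear_diff)
          ultimately have "s * \<bar>\<phi> y - \<phi> x\<bar> \<le> M'" using s by (simp add: abs_mult)
          then have "\<bar>\<phi> y - \<phi> x\<bar> \<le> M' / s" using s by (simp add: field_simps)
          also have "\<dots> = M' * \<epsilon> / (M' + 1)" unfolding s_def using \<epsilon> M' by (simp add: field_simps)
          also have "\<dots> < \<epsilon>" using \<epsilon> M' by (simp add: field_simps)
          finally have "\<phi> y \<in> ball (\<phi> x) \<epsilon>" by (simp add: dist_real_def abs_minus_commute)
          then show "y \<in> {x \<in> UNIV. \<phi> x \<in> U}" using \<epsilon> by auto
        qed
        then show "\<exists>F e. finite F \<and> e > 0 \<and> {y. \<forall>n\<in>F. p n (y - x) < e} \<subseteq> {x \<in> UNIV. \<phi> x \<in> U}"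
          using e by blast
      qed
    qed simp
    then show "\<phi> \<in> top_dual p" using l by (simp add: top_dual_def)
  qed
  define \<K> where "\<K> = {{\<phi>::'a \<Rightarrow> real. \<phi> (x + y) - \<phi> x - \<phi> y \<in> {0}} | x y. True} \<union>
      {{\<phi>. \<phi> (t *\<^sub>R x) - t * \<phi> x \<in> {0}} | t x. True} \<union>
      {{\<phi>. \<phi> y \<in> {-M'..M'}} | y. \<forall>n<N. p n y < \<eta>}"
  have KK: "K = \<Inter>\<K>"
  proof
    show "K \<subseteq> \<Inter>\<K>"
      unfolding K_def \<K>_def linear_iff by (auto simp: abs_le_iff)
    show "\<Inter>\<K> \<subseteq> K"
    proof
      fix \<phi> assume h: "\<phi> \<in> \<Inter>\<K>"
      have "\<phi> (x + y) = \<phi> x + \<phi> y" for x y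
      proof -
        have "{\<phi>::'a \<Rightarrow> real. \<phi> (x + y) - \<phi> x - \<phi> y \<in> {0}} \<in> \<K>" unfolding \<K>_def by blast
        then show ?thesis using h by auto
      qed
      moreover have "\<phi> (t *\<^sub>R x) = t *\<^sub>R \<phi> x" for t x
      proof -
        have "{\<phi>::'a \<Rightarrow> real. \<phi> (t *\<^sub>R x) - t * \<phi> x \<in> {0}} \<in> \<K>" unfolding \<K>_def by blast
        then show ?thesis using h by auto
      qed
      moreover have "\<bar>\<phi> y\<bar> \<le> M'" if "\<forall>n<N. p n y < \<eta>" for y
      proof -
        have "{\<phi>::'a \<Rightarrow> real. \<phi> y \<in> {-M'..M'}} \<in> \<K>" unfolding \<K>_def using that by blast
        then show ?thesis using h by (auto simp: abs_le_iff)
      qed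
      ultimately show "\<phi> \<in> K" unfolding K_def linear_iff by blast
    qed
  qed
  have Kc: "closedin (powertop_real UNIV) K"
    unfolding KK
  proof (rule closedin_Inter)
    show "\<K> \<noteq> {}" unfolding \<K>_def by blast
    fix C assume "C \<in> \<K>"
    then consider (a) x y where "C = {\<phi>::'a \<Rightarrow> real. \<phi> (x + y) - \<phi> x - \<phi> y \<in> {0}}"
      | (b) t x where "C = {\<phi>::'a \<Rightarrow> real. \<phi> (t *\<^sub>R x) - t * \<phi> x \<in> {0}}"
      | (c) y where "C = {\<phi>::'a \<Rightarrow> real. \<phi> y \<in> {-M'..M'}}"
      unfolding \<K>_def by blast
    then show "closedin (powertop_real UNIV) C"
    proof cases
      case a
      show ?thesis unfolding a
        by (rule closed_pre) (intro continuous_map_diff proj_cont, rule closed_singleton)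
    next
      case b
      show ?thesis unfolding b
        by (rule closed_pre) (intro continuous_map_diff continuous_map_real_mult_left proj_cont, rule closed_singleton)
    next
      case c
      show ?thesis unfolding c
        by (rule closed_pre) (rule proj_cont, rule closed_atLeastAtMost)
    qed
  qed
  have Kcomp: "compactin (powertop_real UNIV) K"
  proof -
    define B where "B x = 2 * M' * ((\<Sum>n<N. p n x) + 1) / \<eta>" for x
    have "K \<subseteq> PiE UNIV (\<lambda>x. {-B x..B x})"
    proof
      fix \<phi> assume "\<phi> \<in> K"
      then have l: "linear \<phi>" and b: "\<And>y. (\<forall>n<N. p n y < \<eta>) \<Longrightarrow> \<bar>\<phi> y\<bar> \<le> M'"
        unfolding K_def by auto
      have "\<bar>\<phi> x\<bar> \<le> B x" for x
      proof -
        define Q where "Q = (\<Sum>n<N. p n x)"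
        define t where "t = \<eta> / (2 * (Q + 1))"
        have Q: "Q \<ge> 0" unfolding Q_def using nn by (simp add: sum_nonneg)
        have t: "t > 0" unfolding t_def using Q \<eta> by simp
        have "p n (t *\<^sub>R x) < \<eta>" if "n < N" for n
        proof -
          have "p n x \<le> Q" unfolding Q_def
            by (rule member_le_sum) (use that nn in auto)
          then have "p n (t *\<^sub>R x) \<le> t * Q" using sn_basic(5)[OF sn] t by (simp add: mult_left_mono)
          also have "t * Q < \<eta>" unfolding t_def using Q \<eta>
            by (simp add: field_simps add_nonneg_pos mult_nonneg_nonneg)
          finally show ?thesis .
        qed
        then have "\<bar>\<phi> (t *\<^sub>R x)\<bar> \<le> M'" using b by blast
        then have "t * \<bar>\<phi> x\<bar> \<le> M'" using t l by (simp add: linear_scale abs_mult)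
        then have "\<bar>\<phi> x\<bar> \<le> M' / t" using t by (simp add: field_simps)
        also have "M' / t = B x" unfolding B_def t_def Q_def using \<eta> Q Q_def by (simp add: field_simps)
        finally show ?thesis .
      qed
      then have "\<phi> x \<in> {-B x..B x}" for x using abs_le_D1 abs_le_D2 by fastforce
      then show "\<phi> \<in> PiE UNIV (\<lambda>x. {-B x..B x})" by (simp add: PiE_iff)
    qed
    moreover have "compactin (powertop_real UNIV) (PiE UNIV (\<lambda>x. {-B x..B x}))"
      by (simp add: compactin_PiE compactin_euclidean_iff)
    ultimately show ?thesis using Kc closed_compactin by blast
  qed
  define X where "X = powertop_real (UNIV :: 'a set)"
  have cl: "X closure_of (top_dual p \<inter> H) \<subseteq> K"
    by (rule closure_of_minimal) (use HK Kc in \<open>auto simp: X_def\<close>)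
  have eq: "weak_star p closure_of H = X closure_of (top_dual p \<inter> H)"
    using cl Kd unfolding weak_star_def X_def closure_of_subtopology by blast
  have "compactin X (X closure_of (top_dual p \<inter> H))"
    using closed_compactin[OF Kcomp[folded X_def] cl] by simp
  then show ?thesis unfolding S_def[symmetric] H_def[symmetric] eq
    using cl Kd unfolding weak_star_def compactin_subtopology X_def by blast
qed

end
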